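(* Let $C$ be a set of colors and $\sqsubseteq$ any preference relation on $C^\omega$. For any positive integers $n,q$, any $n$-node arena $\mathcal{A}$ over $C$, and any $q$-state strategy $S_1$ of Player 0 in $\mathcal{A}$, there exists a chromatic $(qn+1)^n$-state strategy $S_2$ of Player 0 in $\mathcal{A}$ such that for every node $v$ of $\mathcal{A}$, $S_2$ is at least as good as $S_1$ w.r.t. $\sqsubseteq$ from $v$.
   Context: A preference relation is a total preorder $\sqsubseteq$ on $C^\omega$. An arena over $C$ is a tuple $\mathcal{A} = \langle V, V_0, V_1, E\rangle$ of finite sets with $V = V_0 \sqcup V_1$, $E \subseteq V \times C \times V$, and every node having at least one outgoing edge; for $e=(s,c,t)$ write $\mathsf{source}(e)=s$, $\mathsf{col}(e)=c$, $\mathsf{target}(e)=t$. A path is a nonempty finite or infinite sequence of edges $e_1e_2\ldots$ with $\mathsf{target}(e_i)=\mathsf{source}(e_{i+1})$; for each node $v$ there is also a $0$-length path $\lambda_v$ with source and target $v$. $\mathsf{col}$ extends letterwise to sequences of edges. A strategy of Player 0 is a function $S$ assigning to each finite path $p$ with $\mathsf{target}(p)\in V_0$ an edge $S(p)$ with $\mathsf{source}(S(p))=\mathsf{target}(p)$. A path $p=e_1e_2\ldots$ is consistent with $S$ if (when $\mathsf{source}(p)\in V_0$) $e_1=S(\lambda_{\mathsf{source}(p)})$ and for each $1\le i<|p|$ with $\mathsf{target}(e_i)\in V_0$ we have $e_{i+1}=S(e_1\ldots e_i)$. For $v\in V$, $\mathsf{col}(S,v)\subseteq C^\omega$ is the set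 of $\mathsf{col}(p)$ over all infinite paths $p$ from $v$ consistent with $S$. A strategy $S_2$ is at least as good as $S_1$ w.r.t. $\sqsubseteq$ from $v$ if for every $\beta\in\mathsf{col}(S_2,v)$ there exists $\alpha\in\mathsf{col}(S_1,v)$ with $\alpha\sqsubseteq\beta$. A memory structure is $\mathcal{M}=\langle M, m_{init},\delta\rangle$ with $M$ finite, $m_{init}\in M$, $\delta: M\times E\to M$ (extended to finite edge sequences in the usual way). $S$ is an $\mathcal{M}$-strategy if for all finite paths $p_1,p_2$ with $\mathsf{target}(p_1)=\mathsf{target}(p_2)\in V_0$, $\delta(m_{init},p_1)=\delta(m_{init},p_2)$ implies $S(p_1)=S(p_2)$. $\mathcal{M}$ is chromatic if there is $\sigma: M\times C\to M$ with $\delta(m,e)=\sigma(m,\mathsf{col}(e))$ for all $m,e$. A (chromatic) $q$-state strategy is an $\mathcal{M}$-strategy for some (chromatic) memory structure $\mathcal{M}$ with $|M|=q$. *)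

theory Defs
  imports Main
begin

(* Colours: the type 'c plays the role of the colour set C.
   Infinite words over C: functions nat => 'c.
   Edges: triples (source, colour, target). *)

type_synonym ('v,'c) edge = "'v \<times> 'c \<times> 'v"

definition source :: "('v,'c) edge \<Rightarrow> 'v" where "source e = fst e"
definition col :: "('v,'c) edge \<Rightarrow> 'c" where "col e = fst (snd e)"
definition target :: "('v,'c) edge \<Rightarrow> 'v" where "target e = snd (snd e)"

definition preference :: "((nat \<Rightarrow> 'c) \<Rightarrow> (nat \<Rightarrow> 'c) \<Rightarrow> bool) \<Rightarrow> bool" where
  "preference P \<longleftrightarrow> (\<forall>a. P a a) \<and> (\<forall>a b c. P a b \<longrightarrow> P b c \<longrightarrow> P a c)
      \<and> (\<forall>a b. P a b \<or> P b a)"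

(* arena <V, V0, V1, E> with V1 = V - V0 *)
definition arena :: "'v set \<Rightarrow> 'v set \<Rightarrow> ('v,'c) edge set \<Rightarrow> bool" where
  "arena V V0 E \<longleftrightarrow> finite V \<and> V0 \<subseteq> V \<and> finite E
     \<and> (\<forall>e\<in>E. source e \<in> V \<and> target e \<in> V)
     \<and> (\<forall>v\<in>V. \<exists>e\<in>E. source e = v)"

(* A finite path is represented as (v, es): start node v and edge list es
   (es = [] is the 0-length path lambda_v). *)
definition fpath :: "'v set \<Rightarrow> ('v,'c) edge set \<Rightarrow> 'v \<Rightarrow> ('v,'c) edge list \<Rightarrow> bool" where
  "fpath V E v es \<longleftrightarrow> v \<in> V \<and> set es \<subseteq> E
     \<and> (es \<noteq> [] \<longrightarrow> source (hd es) = v)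
     \<and> (\<forall>i. Suc i < length es \<longrightarrow> target (es ! i) = source (es ! Suc i))"

definition ptarget :: "'v \<Rightarrow> ('v,'c) edge list \<Rightarrow> 'v" where
  "ptarget v es = (if es = [] then v else target (last es))"

definition strategy :: "'v set \<Rightarrow> 'v set \<Rightarrow> ('v,'c) edge set
     \<Rightarrow> ('v \<Rightarrow> ('v,'c) edge list \<Rightarrow> ('v,'c) edge) \<Rightarrow> bool" where
  "strategy V V0 E S \<longleftrightarrow> (\<forall>v es. fpath V E v es \<longrightarrow> ptarget v es \<in> V0 \<longrightarrow>
      S v es \<in> E \<and> source (S v es) = ptarget v es)"

definition colS :: "'v set \<Rightarrow> 'v set \<Rightarrow> ('v,'c) edge set
     \<Rightarrow> ('v \<Rightarrow> ('v,'c) edge list \<Rightarrow> ('v,'c) edge) \<Rightarrow> 'v \<Rightarrow> (nat \<Rightarrow> 'c) set" where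
  "colS V V0 E S v = {(\<lambda>i. col (p i)) | p.
      (\<forall>i. p i \<in> E) \<and> source (p 0) = v
      \<and> (\<forall>i. target (p i) = source (p (Suc i)))
      \<and> (v \<in> V0 \<longrightarrow> p 0 = S v [])
      \<and> (\<forall>i. target (p i) \<in> V0 \<longrightarrow> p (Suc i) = S v (map p [0..<Suc i]))}"

definition at_least_as_good ::
  "((nat \<Rightarrow> 'c) \<Rightarrow> (nat \<Rightarrow> 'c) \<Rightarrow> bool) \<Rightarrow> 'v set \<Rightarrow> 'v set \<Rightarrow> ('v,'c) edge set
     \<Rightarrow> ('v \<Rightarrow> ('v,'c) edge list \<Rightarrow> ('v,'c) edge)
     \<Rightarrow> ('v \<Rightarrow> ('v,'c) edge list \<Rightarrow> ('v,'c) edge) \<Rightarrow> 'v \<Rightarrow> bool" where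
  "at_least_as_good P V V0 E S2 S1 v \<longleftrightarrow>
     (\<forall>\<beta>\<in>colS V V0 E S2 v. \<exists>\<alpha>\<in>colS V V0 E S1 v. P \<alpha> \<beta>)"

definition memory :: "('v,'c) edge set \<Rightarrow> 'm set \<Rightarrow> 'm \<Rightarrow> ('m \<Rightarrow> ('v,'c) edge \<Rightarrow> 'm) \<Rightarrow> bool" where
  "memory E M minit \<delta> \<longleftrightarrow> finite M \<and> minit \<in> M \<and> (\<forall>m\<in>M. \<forall>e\<in>E. \<delta> m e \<in> M)"

definition delta_star :: "('m \<Rightarrow> ('v,'c) edge \<Rightarrow> 'm) \<Rightarrow> 'm \<Rightarrow> ('v,'c) edge list \<Rightarrow> 'm" where
  "delta_star \<delta> m es = foldl \<delta> m es"

definition chromatic :: "('v,'c) edge set \<Rightarrow> 'm set \<Rightarrow> ('m \<Rightarrow> ('v,'c) edge \<Rightarrow> 'm) \<Rightarrow> bool" where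
  "chromatic E M \<delta> \<longleftrightarrow> (\<exists>\<sigma>. \<forall>m\<in>M. \<forall>e\<in>E. \<delta> m e = \<sigma> m (col e))"

definition mem_strategy :: "'v set \<Rightarrow> 'v set \<Rightarrow> ('v,'c) edge set \<Rightarrow> 'm \<Rightarrow> ('m \<Rightarrow> ('v,'c) edge \<Rightarrow> 'm)
     \<Rightarrow> ('v \<Rightarrow> ('v,'c) edge list \<Rightarrow> ('v,'c) edge) \<Rightarrow> bool" where
  "mem_strategy V V0 E minit \<delta> S \<longleftrightarrow>
     (\<forall>v1 es1 v2 es2. fpath V E v1 es1 \<longrightarrow> fpath V E v2 es2 \<longrightarrow>
        ptarget v1 es1 = ptarget v2 es2 \<longrightarrow> ptarget v1 es1 \<in> V0 \<longrightarrow>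
        delta_star \<delta> minit es1 = delta_star \<delta> minit es2 \<longrightarrow> S v1 es1 = S v2 es2)"

(* q-state strategy; memory states drawn from nat (WLOG, any finite set of size q) *)
definition q_state :: "'v set \<Rightarrow> 'v set \<Rightarrow> ('v,'c) edge set \<Rightarrow> nat
     \<Rightarrow> ('v \<Rightarrow> ('v,'c) edge list \<Rightarrow> ('v,'c) edge) \<Rightarrow> bool" where
  "q_state V V0 E q S \<longleftrightarrow> (\<exists>(M::nat set) minit \<delta>. memory E M minit \<delta> \<and> card M = q
      \<and> mem_strategy V V0 E minit \<delta> S)"

definition chromatic_q_state :: "'v set \<Rightarrow> 'v set \<Rightarrow> ('v,'c) edge set \<Rightarrow> nat
     \<Rightarrow> ('v \<Rightarrow> ('v,'c) edge list \<Rightarrow> ('v,'c) edge) \<Rightarrow> bool" where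
  "chromatic_q_state V V0 E q S \<longleftrightarrow> (\<exists>(M::nat set) minit \<delta>. memory E M minit \<delta> \<and> card M = q
      \<and> chromatic E M \<delta> \<and> mem_strategy V V0 E minit \<delta> S)"

end

theory Submission
  imports Defs "HOL-Library.FuncSet"
begin


primrec kpre :: "('a list \<Rightarrow> bool) \<Rightarrow> nat \<Rightarrow> 'a list" where
  "kpre G 0 = []"
| "kpre G (Suc n) = kpre G n @ [SOME e. G (kpre G n @ [e])]"

lemma koenig:
  assumes fin: "finite E"
    and sub: "\<And>es. Q es \<Longrightarrow> set es \<subseteq> E"
    and pref: "\<And>es k. Q es \<Longrightarrow> Q (take k es)"
    and all: "\<And>t. \<exists>es. Q es \<and> length es = t"
  shows "\<exists>p. \<forall>t. Q (map p [0..<t])"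
proof -
  define G where "G es = (\<forall>t. \<exists>ext. Q (es @ ext) \<and> length ext = t)" for es
  have G0: "G []" using all by (simp add: G_def)
  have Gstep: "\<exists>e. G (es @ [e])" if Ges: "G es" for es
  proof (rule ccontr)
    assume "\<not> (\<exists>e. G (es @ [e]))"
    then have "\<forall>e\<in>E. \<exists>t. \<forall>ext. Q (es @ [e] @ ext) \<longrightarrow> length ext \<noteq> t"
      by (auto simp: G_def)
    then obtain tf where tf: "\<And>e ext. e \<in> E \<Longrightarrow> Q (es @ [e] @ ext) \<Longrightarrow> length ext \<noteq> tf e"
      by metis
    define t where "t = Max (insert 0 (tf ` E))"
    obtain ext where ext: "Q (es @ ext)" "length ext = Suc t" using Ges G_def by blast
    then obtain e ext' where exte: "ext = e # ext'" and l: "length ext' = t" by (cases ext) auto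
    have "set (es @ ext) \<subseteq> E" using sub ext by blast
    then have eE: "e \<in> E" using exte by auto
    have tle: "tf e \<le> t" unfolding t_def using fin eE by (intro Max_ge) auto
    have "Q (take (length es + 1 + tf e) (es @ ext))" using pref ext by blast
    also have "take (length es + 1 + tf e) (es @ ext) = es @ [e] @ take (tf e) ext'"
      using exte by simp
    finally have "Q (es @ [e] @ take (tf e) ext')" .
    moreover have "length (take (tf e) ext') = tf e" using l tle by simp
    ultimately show False using tf eE by blast
  qed
  define pre where "pre = kpre G"
  have Gpre: "G (pre n)" for n
  proof (induction n)
    case 0 then show ?case using G0 by (simp add: pre_def)
  next
    case (Suc n)
    have "\<exists>e. G (kpre G n @ [e])" using Suc Gstep pre_def by simp
    from someI_ex[OF this] show ?case by (simp add: pre_def)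
  qed
  have len: "length (pre n) = n" for n by (induction n) (simp_all add: pre_def)
  define p where "p i = pre (Suc i) ! i" for i
  have mp: "map p [0..<t] = pre t" for t
  proof (induction t)
    case 0 then show ?case by (simp add: pre_def)
  next
    case (Suc t)
    have "p t = (SOME e. G (pre t @ [e]))" unfolding p_def pre_def
      using len[of t] by (simp add: pre_def nth_append)
    then show ?case using Suc by (simp add: pre_def)
  qed
  have "Q (pre t)" for t
  proof -
    obtain ext where "Q (pre t @ ext)" "length ext = 0" using Gpre[of t] G_def by blast
    then show ?thesis by simp
  qed
  then show ?thesis using mp by metis
qed




locale L =
  fixes V V0 :: "'v set" and E :: "('v,'c) edge set"
    and S1 :: "'v \<Rightarrow> ('v,'c) edge list \<Rightarrow> ('v,'c) edge"
    and P :: "(nat \<Rightarrow> 'c) \<Rightarrow> (nat \<Rightarrow> 'c) \<Rightarrow> bool"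
    and M :: "nat set" and minit :: nat and \<delta> :: "nat \<Rightarrow> ('v,'c) edge \<Rightarrow> nat"
  assumes pref: "preference P" and ar: "arena V V0 E" and st: "strategy V V0 E S1"
    and mem: "memory E M minit \<delta>" and ms: "mem_strategy V V0 E minit \<delta> S1"
begin

lemma finV: "finite V" using ar by (simp add: arena_def)
lemma V0V: "V0 \<subseteq> V" using ar by (simp add: arena_def)
lemma finE: "finite E" using ar by (simp add: arena_def)
lemma srcV: "e \<in> E \<Longrightarrow> source e \<in> V" using ar by (simp add: arena_def)
lemma tgtV: "e \<in> E \<Longrightarrow> target e \<in> V" using ar by (simp add: arena_def)
lemma outE: "x \<in> V \<Longrightarrow> \<exists>e\<in>E. source e = x" using ar by (simp add: arena_def)

definition cons1 :: "'v \<Rightarrow> ('v,'c) edge list \<Rightarrow> bool" where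
  "cons1 u es \<longleftrightarrow> fpath V E u es \<and>
     (\<forall>i<length es. ptarget u (take i es) \<in> V0 \<longrightarrow> es ! i = S1 u (take i es))"

definition g :: "'v \<Rightarrow> nat \<Rightarrow> ('v,'c) edge" where
  "g x m = (if \<exists>w es. fpath V E w es \<and> ptarget w es = x \<and> delta_star \<delta> minit es = m
      then (let we = SOME we. fpath V E (fst we) (snd we) \<and> ptarget (fst we) (snd we) = x
                 \<and> delta_star \<delta> minit (snd we) = m in S1 (fst we) (snd we))
      else (SOME e. e \<in> E \<and> source e = x))"

lemma g_ok: assumes "x \<in> V0" shows "g x m \<in> E \<and> source (g x m) = x"
proof (cases "\<exists>w es. fpath V E w es \<and> ptarget w es = x \<and> delta_star \<delta> minit es = m")
  case True
  define we where "we = (SOME we. fpath V E (fst we) (snd we) \<and> ptarget (fst we) (snd we) = x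
                 \<and> delta_star \<delta> minit (snd we) = m)"
  have "\<exists>we. fpath V E (fst we) (snd we) \<and> ptarget (fst we) (snd we) = x
                 \<and> delta_star \<delta> minit (snd we) = m" using True by auto
  from someI_ex[OF this] have w: "fpath V E (fst we) (snd we)" "ptarget (fst we) (snd we) = x"
    unfolding we_def by auto
  have "g x m = S1 (fst we) (snd we)" using True unfolding g_def we_def by (simp add: Let_def)
  then show ?thesis using st w assms unfolding strategy_def by auto
next
  case False
  have ex: "\<exists>e. e \<in> E \<and> source e = x" using outE assms V0V by blast
  have "g x m = (SOME e. e \<in> E \<and> source e = x)" unfolding g_def if_not_P[OF False] by (rule refl)
  with someI_ex[OF ex] show ?thesis by simp
qed

lemma g_eq: assumes "fpath V E w es" "ptarget w es \<in> V0"
  shows "S1 w es = g (ptarget w es) (delta_star \<delta> minit es)"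
proof -
  define x where "x = ptarget w es"
  define m where "m = delta_star \<delta> minit es"
  have T: "\<exists>w es. fpath V E w es \<and> ptarget w es = x \<and> delta_star \<delta> minit es = m"
    using assms x_def m_def by blast
  define we where "we = (SOME we. fpath V E (fst we) (snd we) \<and> ptarget (fst we) (snd we) = x
                 \<and> delta_star \<delta> minit (snd we) = m)"
  have "\<exists>we. fpath V E (fst we) (snd we) \<and> ptarget (fst we) (snd we) = x
                 \<and> delta_star \<delta> minit (snd we) = m" using T by auto
  from someI_ex[OF this] have w: "fpath V E (fst we) (snd we)" "ptarget (fst we) (snd we) = x"
     "delta_star \<delta> minit (snd we) = m"
    unfolding we_def by auto
  have "g x m = S1 (fst we) (snd we)" using T unfolding g_def we_def by (simp add: Let_def)
  moreover have "S1 (fst we) (snd we) = S1 w es"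
    using ms w assms unfolding mem_strategy_def x_def m_def by metis
  ultimately show ?thesis unfolding x_def m_def by simp
qed

definition Up :: "'v \<Rightarrow> (nat \<Rightarrow> 'c) set" where
  "Up u = {\<beta>. \<exists>\<alpha>\<in>colS V V0 E S1 u. P \<alpha> \<beta>}"

lemma Up_total: "Up u \<subseteq> Up v \<or> Up v \<subseteq> Up u"
proof (rule ccontr)
  assume "\<not> ?thesis"
  then obtain b c where b: "b \<in> Up u" "b \<notin> Up v" and c: "c \<in> Up v" "c \<notin> Up u" by blast
  from pref have tr: "\<And>a b c. P a b \<Longrightarrow> P b c \<Longrightarrow> P a c" and to: "\<And>a b. P a b \<or> P b a"
    unfolding preference_def by blast+
  show False
  proof (cases "P b c")
    case True
    then show False using b c tr unfolding Up_def by blast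
  next
    case False
    then have "P c b" using to by blast
    then show False using b c tr unfolding Up_def by blast
  qed
qed

definition rank :: "'v \<Rightarrow> nat" where "rank u = card {w\<in>V. Up w \<subset> Up u}"

lemma rank_le: assumes "u \<in> V" "v \<in> V" "rank u \<le> rank v" shows "Up u \<subseteq> Up v"
proof (rule ccontr)
  assume n: "\<not> Up u \<subseteq> Up v"
  then have vu: "Up v \<subset> Up u" using Up_total by blast
  have "{w\<in>V. Up w \<subset> Up v} \<subset> {w\<in>V. Up w \<subset> Up u}"
    using vu assms by blast
  then have "rank v < rank u" unfolding rank_def
    by (intro psubset_card_mono) (auto intro: finite_subset[OF _ finV])
  then show False using assms by simp
qed

definition idx :: "'v \<Rightarrow> nat" where "idx = (SOME h. bij_betw h V {0..<card V})"

lemma idx_bij: "bij_betw idx V {0..<card V}"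
proof -
  have "\<exists>h. bij_betw h V {0..<card V}" using ex_bij_betw_finite_nat[OF finV] .
  from someI_ex[OF this] show ?thesis unfolding idx_def .
qed

definition r :: "'v \<Rightarrow> nat" where "r u = rank u * card V + idx u"

lemma idx_lt: "u \<in> V \<Longrightarrow> idx u < card V"
  using idx_bij unfolding bij_betw_def by auto

lemma r_div: "u \<in> V \<Longrightarrow> r u div card V = rank u"
  using idx_lt[of u] unfolding r_def by simp

lemma r_mod: "u \<in> V \<Longrightarrow> r u mod card V = idx u"
  using idx_lt[of u] unfolding r_def by simp

lemma r_le: "u \<in> V \<Longrightarrow> v \<in> V \<Longrightarrow> r u \<le> r v \<Longrightarrow> Up u \<subseteq> Up v"
  using rank_le r_div div_le_mono by metis

lemma r_inj: "u \<in> V \<Longrightarrow> v \<in> V \<Longrightarrow> r u = r v \<Longrightarrow> u = v"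
  using r_mod idx_bij unfolding bij_betw_def inj_on_def by metis

end




context L
begin

lemma fpath_snoc:
  assumes "fpath V E u es" "e \<in> E" "source e = ptarget u es"
  shows "fpath V E u (es @ [e])"
  using assms unfolding fpath_def ptarget_def
  apply (auto simp: nth_append last_conv_nth less_Suc_eq split: if_splits)
  by (metis One_nat_def diff_Suc_1)

lemma cons1_snoc:
  assumes "cons1 u es" "e \<in> E" "source e = ptarget u es" "ptarget u es \<in> V0 \<longrightarrow> e = S1 u es"
  shows "cons1 u (es @ [e])"
  using assms fpath_snoc unfolding cons1_def
  by (auto simp: nth_append less_Suc_eq)

lemma fpath_take: assumes "fpath V E u es" shows "fpath V E u (take k es)"
proof -
  have "set (take k es) \<subseteq> set es" by (rule set_take_subset)
  moreover have "take k es \<noteq> [] \<Longrightarrow> hd (take k es) = hd es" by (cases es; cases k) auto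
  ultimately show ?thesis using assms unfolding fpath_def by (auto simp: nth_take)
qed

lemma cons1_take: assumes "cons1 u es" shows "cons1 u (take k es)"
  using assms fpath_take unfolding cons1_def by (auto simp: min_def)

lemma ptarget_snoc: "ptarget u (es @ [e]) = target e" by (simp add: ptarget_def)
lemma delta_star_snoc: "delta_star d m (es @ [e]) = d (delta_star d m es) e"
  by (simp add: delta_star_def)

definition Cand :: "('v \<Rightarrow> ('v \<times> nat) option) \<Rightarrow> 'c \<Rightarrow> 'v \<Rightarrow> ('v \<times> nat) set" where
  "Cand f c y = {(u, \<delta> m e) | x u m e. x \<in> V \<and> f x = Some (u, m) \<and> e \<in> E \<and> source e = x
      \<and> target e = y \<and> col e = c \<and> (x \<in> V0 \<longrightarrow> e = g x m)}"

definition sig :: "('v \<Rightarrow> ('v \<times> nat) option) \<Rightarrow> 'c \<Rightarrow> ('v \<Rightarrow> ('v \<times> nat) option)" where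
  "sig f c = (\<lambda>y. if y \<in> V then (if Cand f c y = {} then None
       else Some (SOME pr. pr \<in> Cand f c y \<and> (\<forall>pr'\<in>Cand f c y. r (fst pr) \<le> r (fst pr'))))
     else undefined)"

definition f0 :: "'v \<Rightarrow> ('v \<times> nat) option" where
  "f0 = (\<lambda>y. if y \<in> V then Some (y, minit) else undefined)"

definition FF :: "('v \<Rightarrow> ('v \<times> nat) option) set" where
  "FF = (\<Pi>\<^sub>E y\<in>V. insert None (Some ` (V \<times> M)))"

definition act :: "'v \<Rightarrow> ('v \<Rightarrow> ('v \<times> nat) option) \<Rightarrow> ('v,'c) edge" where
  "act y f = g y (case f y of Some um \<Rightarrow> snd um | None \<Rightarrow> minit)"

lemma sig_choice:
  assumes "y \<in> V" "pr0 \<in> Cand f c y"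
  shows "\<exists>pr. sig f c y = Some pr \<and> pr \<in> Cand f c y \<and> r (fst pr) \<le> r (fst pr0)"
proof -
  have ex: "\<exists>pr. pr \<in> Cand f c y \<and> (\<forall>pr'\<in>Cand f c y. r (fst pr) \<le> r (fst pr'))"
    using ex_has_least_nat[of "\<lambda>pr. pr \<in> Cand f c y" pr0 "\<lambda>pr. r (fst pr)"] assms by blast
  have "Cand f c y \<noteq> {}" using assms by blast
  then have "sig f c y = Some (SOME pr. pr \<in> Cand f c y \<and> (\<forall>pr'\<in>Cand f c y. r (fst pr) \<le> r (fst pr')))"
    using assms unfolding sig_def by simp
  with someI_ex[OF ex] show ?thesis using assms by blast
qed

lemma sig_Some:
  assumes "y \<in> V" "sig f c y = Some pr"
  shows "pr \<in> Cand f c y"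
proof -
  have ne: "Cand f c y \<noteq> {}" using assms unfolding sig_def by (auto split: if_splits)
  then obtain pr0 where "pr0 \<in> Cand f c y" by blast
  then show ?thesis using sig_choice[OF assms(1)] assms by fastforce
qed

lemma memD: "m \<in> M \<Longrightarrow> e \<in> E \<Longrightarrow> \<delta> m e \<in> M" "minit \<in> M" "finite M"
  using mem unfolding memory_def by auto

lemma f0_FF: "f0 \<in> FF"
  unfolding f0_def FF_def using memD by (auto simp: PiE_def extensional_def)

lemma sig_FF: assumes "f \<in> FF" shows "sig f c \<in> FF"
proof -
  have "sig f c y \<in> insert None (Some ` (V \<times> M))" if y: "y \<in> V" for y
  proof (cases "sig f c y")
    case None then show ?thesis by simp
  next
    case (Some pr)
    then have "pr \<in> Cand f c y" using sig_Some y by blast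
    then obtain x u m e where pr: "pr = (u, \<delta> m e)" "x \<in> V" "f x = Some (u, m)" "e \<in> E"
      unfolding Cand_def by blast
    have "f x \<in> insert None (Some ` (V \<times> M))" using assms pr(2) unfolding FF_def by blast
    then have "u \<in> V" "m \<in> M" using pr by auto
    then show ?thesis using Some pr memD by auto
  qed
  then show ?thesis unfolding FF_def by (auto simp: sig_def PiE_def extensional_def)
qed

lemma inv_J:
  "x \<in> V \<Longrightarrow> foldl sig f0 ws x = Some (u, m) \<Longrightarrow>
    u \<in> V \<and> (\<exists>es. cons1 u es \<and> map col es = ws \<and> ptarget u es = x \<and> delta_star \<delta> minit es = m)"
proof (induction ws arbitrary: x u m rule: rev_induct)
  case Nil
  then have "u = x" "m = minit" by (auto simp: f0_def)
  moreover have "cons1 x []" using Nil by (simp add: cons1_def fpath_def)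
  ultimately show ?case using Nil by (auto simp: ptarget_def delta_star_def)
next
  case (snoc c ws)
  have "sig (foldl sig f0 ws) c x = Some (u, m)" using snoc.prems by simp
  then have "(u, m) \<in> Cand (foldl sig f0 ws) c x" using sig_Some snoc.prems by blast
  then obtain x0 m0 e where x0: "x0 \<in> V" "foldl sig f0 ws x0 = Some (u, m0)" "e \<in> E"
    "source e = x0" "target e = x" "col e = c" "x0 \<in> V0 \<longrightarrow> e = g x0 m0" "m = \<delta> m0 e"
    unfolding Cand_def by blast
  from snoc.IH[OF x0(1,2)] obtain es where es: "u \<in> V" "cons1 u es" "map col es = ws"
    "ptarget u es = x0" "delta_star \<delta> minit es = m0" by blast
  have "ptarget u es \<in> V0 \<longrightarrow> e = S1 u es"
    using g_eq[of u es] es x0 unfolding cons1_def by auto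
  then have "cons1 u (es @ [e])" using cons1_snoc es x0 by auto
  then show ?case using es x0 by (auto simp: ptarget_snoc delta_star_snoc)
qed

end




context L
begin

lemma cons1_inf:
  assumes "\<forall>t. cons1 u (map q [0..<t])"
  shows "(\<forall>i. q i \<in> E) \<and> source (q 0) = u \<and> (\<forall>i. target (q i) = source (q (Suc i)))
      \<and> (u \<in> V0 \<longrightarrow> q 0 = S1 u []) \<and> (\<forall>i. target (q i) \<in> V0 \<longrightarrow> q (Suc i) = S1 u (map q [0..<Suc i]))"
proof -
  have A: "q i \<in> E" for i
    using assms[rule_format, of "Suc i"] unfolding cons1_def fpath_def by auto
  have B: "source (q 0) = u"
    using assms[rule_format, of "Suc 0"] unfolding cons1_def fpath_def by auto
  have C: "target (q i) = source (q (Suc i))" for i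
  proof -
    have "fpath V E u (map q [0..<Suc (Suc i)])" using assms cons1_def by blast
    then have "target (map q [0..<Suc (Suc i)] ! i) = source (map q [0..<Suc (Suc i)] ! Suc i)"
      unfolding fpath_def by (metis length_map length_upt lessI minus_nat.diff_0)
    then show ?thesis by (simp del: upt_Suc)
  qed
  have D: "u \<in> V0 \<longrightarrow> q 0 = S1 u []"
    using assms[rule_format, of "Suc 0"] unfolding cons1_def by (auto simp: ptarget_def)
  have E: "target (q i) \<in> V0 \<longrightarrow> q (Suc i) = S1 u (map q [0..<Suc i])" for i
  proof -
    have c: "cons1 u (map q [0..<Suc (Suc i)])" using assms by blast
    have tk: "take (Suc i) (map q [0..<Suc (Suc i)]) = map q [0..<Suc i]"
      by (simp add: take_map del: upt_Suc)
    have pt: "ptarget u (map q [0..<Suc i]) = target (q i)" by (simp add: ptarget_def)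
    have "Suc i < length (map q [0..<Suc (Suc i)])" by simp
    with c have "ptarget u (take (Suc i) (map q [0..<Suc (Suc i)])) \<in> V0 \<longrightarrow>
       map q [0..<Suc (Suc i)] ! Suc i = S1 u (take (Suc i) (map q [0..<Suc (Suc i)]))"
      unfolding cons1_def by blast
    then show ?thesis using tk pt by (simp del: upt_Suc)
  qed
  show "(\<forall>i. q i \<in> E) \<and> source (q 0) = u \<and> (\<forall>i. target (q i) = source (q (Suc i)))
      \<and> (u \<in> V0 \<longrightarrow> q 0 = S1 u []) \<and> (\<forall>i. target (q i) \<in> V0 \<longrightarrow> q (Suc i) = S1 u (map q [0..<Suc i]))"
    using A B C D E by blast
qed

lemma main:
  assumes S2: "\<And>v es. S2 v es = act (ptarget v es) (foldl sig f0 (map col es))"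
    and v: "v \<in> V" and b: "\<beta> \<in> colS V V0 E S2 v"
  shows "\<exists>\<alpha>\<in>colS V V0 E S1 v. P \<alpha> \<beta>"
proof -
  obtain p where pE: "\<And>i. p i \<in> E" and p0: "source (p 0) = v"
    and pc: "\<And>i. target (p i) = source (p (Suc i))"
    and pv: "v \<in> V0 \<longrightarrow> p 0 = S2 v []"
    and ps: "\<And>i. target (p i) \<in> V0 \<longrightarrow> p (Suc i) = S2 v (map p [0..<Suc i])"
    and bp: "\<beta> = (\<lambda>i. col (p i))"
    using b unfolding colS_def by blast
  define W where "W t = foldl sig f0 (map \<beta> [0..<t])" for t
  have ptg: "ptarget v (map p [0..<t]) = source (p t)" for t
    by (cases t) (auto simp: ptarget_def p0 pc)
  have yV: "source (p t) \<in> V" for t using srcV pE by blast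
  have choice: "source (p t) \<in> V0 \<Longrightarrow> p t = S2 v (map p [0..<t])" for t
    using pv ps pc p0 by (cases t) auto
  have Wmap: "foldl sig f0 (map col (map p [0..<t])) = W t" for t
    unfolding W_def bp by (simp add: comp_def)
  have Wsuc: "W (Suc t) = sig (W t) (\<beta> t)" for t unfolding W_def by simp
  have step: "\<exists>pr. W (Suc t) (source (p (Suc t))) = Some pr \<and> r (fst pr) \<le> r u"
    if h: "W t (source (p t)) = Some (u, m)" for t u m
  proof -
    have "(u, \<delta> m (p t)) \<in> Cand (W t) (\<beta> t) (source (p (Suc t)))"
    proof -
      have "source (p t) \<in> V0 \<longrightarrow> p t = g (source (p t)) m"
        using choice[of t] S2 ptg Wmap h by (auto simp: act_def)
      then show ?thesis unfolding Cand_def using yV pE h pc bp by blast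
    qed
    from sig_choice[OF yV this] show ?thesis using Wsuc by auto
  qed
  have ex: "\<exists>pr. W t (source (p t)) = Some pr" for t
  proof (induction t)
    case 0 then show ?case by (simp add: W_def f0_def p0 v)
  next
    case (Suc t)
    then obtain u m where "W t (source (p t)) = Some (u, m)" by auto
    then show ?case using step by blast
  qed
  define U where "U t = fst (the (W t (source (p t))))" for t
  have Umono: "r (U (Suc t)) \<le> r (U t)" for t
  proof -
    obtain u m where h: "W t (source (p t)) = Some (u, m)" using ex by (metis prod.collapse)
    from step[OF h] show ?thesis unfolding U_def using h by auto
  qed
  have U0: "U 0 = v" by (simp add: U_def W_def f0_def p0 v)
  have wit: "U t \<in> V \<and> (\<exists>es. cons1 (U t) es \<and> map col es = map \<beta> [0..<t])" for t
  proof -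
    obtain u m where h: "W t (source (p t)) = Some (u, m)" using ex by (metis prod.collapse)
    have "U t = u" unfolding U_def using h by simp
    then show ?thesis using inv_J[OF yV h[unfolded W_def]] by blast
  qed
  obtain T where T: "\<And>t. r (U T) \<le> r (U t)"
    using ex_has_least_nat[of "\<lambda>_. True" 0 "\<lambda>t. r (U t)"] by blast
  have Ueq: "U t = U T" if "T \<le> t" for t
  proof -
    have "r (U t) \<le> r (U T)" using lift_Suc_antimono_le[of "\<lambda>t. r (U t)", OF Umono that] .
    then have "r (U t) = r (U T)" using T[of t] by simp
    then show ?thesis using r_inj wit by blast
  qed
  define u where "u = U T"
  define Q where "Q es = (cons1 u es \<and> map col es = map \<beta> [0..<length es])" for es
  have allt: "\<exists>es. Q es \<and> length es = t" for t
  proof (cases "T \<le> t")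
    case True
    then obtain es where "cons1 u es" "map col es = map \<beta> [0..<t]"
      using wit[of t] Ueq[OF True] u_def by auto
    moreover then have "length es = t" by (metis length_map length_upt minus_nat.diff_0)
    ultimately show ?thesis unfolding Q_def by auto
  next
    case False
    obtain es where es: "cons1 u es" "map col es = map \<beta> [0..<T]"
      using wit[of T] u_def by auto
    then have l: "length es = T" by (metis length_map length_upt minus_nat.diff_0)
    have "cons1 u (take t es)" using cons1_take es by blast
    moreover have "map col (take t es) = map \<beta> [0..<t]"
      using es False by (metis take_map take_upt add_0 le_add_diff_inverse linorder_le_cases)
    moreover have "length (take t es) = t" using l False by simp
    ultimately show ?thesis unfolding Q_def by auto
  qed
  have Qsub: "set es \<subseteq> E" if "Q es" for es using that unfolding Q_def cons1_def fpath_def by blast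
  have Qpref: "Q (take k es)" if "Q es" for es k
  proof -
    have "map col (take k es) = take k (map \<beta> [0..<length es])" using that unfolding Q_def
      by (metis take_map)
    also have "\<dots> = map \<beta> [0..<length (take k es)]" by (simp add: take_map min_def)
    finally show ?thesis using that cons1_take unfolding Q_def by blast
  qed
  obtain q where q: "\<And>t. Q (map q [0..<t])"
    using koenig[OF finE Qsub Qpref allt] by blast
  have qc: "\<forall>t. cons1 u (map q [0..<t])" using q unfolding Q_def by blast
  have qcol: "col (q i) = \<beta> i" for i
  proof -
    have "map col (map q [0..<Suc i]) = map \<beta> [0..<Suc i]" using q[of "Suc i"] unfolding Q_def by simp
    then show ?thesis by simp
  qed
  have "\<beta> = (\<lambda>i. col (q i))" using qcol by auto
  then have bu: "\<beta> \<in> colS V V0 E S1 u" using cons1_inf[OF qc] unfolding colS_def by blast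
  have "P \<beta> \<beta>" using pref unfolding preference_def by blast
  then have "\<beta> \<in> Up u" using bu unfolding Up_def by blast
  moreover have "r u \<le> r v" using lift_Suc_antimono_le[of "\<lambda>t. r (U t)", OF Umono, of 0 T] U0 u_def by simp
  then have "Up u \<subseteq> Up v" using r_le wit v u_def by blast
  ultimately show ?thesis unfolding Up_def by blast
qed

end




theorem corollary2:
  fixes P :: "(nat \<Rightarrow> 'c) \<Rightarrow> (nat \<Rightarrow> 'c) \<Rightarrow> bool"
    and V V0 :: "'v set" and E :: "('v,'c) edge set"
    and S1 :: "'v \<Rightarrow> ('v,'c) edge list \<Rightarrow> ('v,'c) edge"
    and n q :: nat
  assumes "preference P"
    and "n > 0" and "q > 0"
    and "arena V V0 E" and "card V = n"
    and "strategy V V0 E S1" and "q_state V V0 E q S1"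
  shows "\<exists>S2. strategy V V0 E S2 \<and> chromatic_q_state V V0 E ((q * n + 1) ^ n) S2
           \<and> (\<forall>v\<in>V. at_least_as_good P V V0 E S2 S1 v)"
proof -
  obtain M :: "nat set" and minit \<delta> where mem: "memory E M minit \<delta>" and cM: "card M = q"
    and ms: "mem_strategy V V0 E minit \<delta> S1"
    using assms(7) unfolding q_state_def by blast
  interpret L V V0 E S1 P M minit \<delta>
    using assms mem ms by unfold_locales auto
  define K where "K = (q * n + 1) ^ n"
  define B where "B = insert None (Some ` (V \<times> M))"
  have finB: "finite B" unfolding B_def using finV memD(3) by simp
  have finFF: "finite FF" unfolding FF_def B_def[symmetric] using finV finB by (simp add: finite_PiE)
  have cB: "card B = q * n + 1"
  proof -
    have "card (Some ` (V \<times> M)) = card (V \<times> M)" by (rule card_image) simp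
    also have "\<dots> = n * q" using assms(5) cM by (simp add: card_cartesian_product)
    finally show ?thesis unfolding B_def using finV memD(3)
      by (subst card_insert_disjoint) auto
  qed
  have cFF: "card FF = K" unfolding FF_def B_def[symmetric] K_def
    using card_PiE[OF finV, of "\<lambda>_. B"] cB assms(5) by simp
  obtain h where h: "bij_betw h {0..<K} FF"
    using ex_bij_betw_nat_finite[OF finFF] cFF by metis
  define enc where "enc = inv_into {0..<K} h"
  have henc: "h (enc f) = f" if "f \<in> FF" for f
    using that h unfolding enc_def by (simp add: bij_betw_inv_into_right)
  have encin: "enc f \<in> {0..<K}" if "f \<in> FF" for f
    using that h unfolding enc_def by (metis bij_betw_apply bij_betw_inv_into)
  have hin: "h k \<in> FF" if "k \<in> {0..<K}" for k
    using that h by (metis bij_betw_apply)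
  define \<sigma>n where "\<sigma>n k c = enc (sig (h k) c)" for k c
  define \<delta>n where "\<delta>n k e = \<sigma>n k (col e)" for k and e :: "('v,'c) edge"
  define kinit where "kinit = enc f0"
  have fold: "h (foldl \<delta>n (enc f) es) = foldl sig f (map col es)" if "f \<in> FF" for f es
    using that
  proof (induction es arbitrary: f)
    case Nil then show ?case by (simp add: henc)
  next
    case (Cons e es)
    have "\<delta>n (enc f) e = enc (sig f (col e))" unfolding \<delta>n_def \<sigma>n_def using henc Cons.prems by simp
    then show ?case using Cons.IH[OF sig_FF[OF Cons.prems]] by simp
  qed
  define S2 where "S2 v es = act (ptarget v es) (h (delta_star \<delta>n kinit es))" for v es
  have S2eq: "S2 v es = act (ptarget v es) (foldl sig f0 (map col es))" for v es
    unfolding S2_def kinit_def delta_star_def using fold[OF f0_FF] by simp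
  have "strategy V V0 E S2"
    unfolding strategy_def S2_def act_def using g_ok by blast
  moreover have "chromatic_q_state V V0 E K S2"
    unfolding chromatic_q_state_def
  proof (intro exI conjI)
    show "memory E {0..<K} kinit \<delta>n"
      unfolding memory_def kinit_def \<delta>n_def \<sigma>n_def
      using encin f0_FF sig_FF hin by auto
    show "card {0..<K} = K" by simp
    show "chromatic E {0..<K} \<delta>n" unfolding chromatic_def \<delta>n_def by blast
    show "mem_strategy V V0 E kinit \<delta>n S2" unfolding mem_strategy_def S2_def by simp
  qed
  moreover have "\<forall>v\<in>V. at_least_as_good P V V0 E S2 S1 v"
    unfolding at_least_as_good_def using main[OF S2eq] by blast
  ultimately show ?thesis unfolding K_def by blast
qed


end
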